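(* Let $M>0$, $0<a<M$, $\mu>0$, $m\in\mathbb{Z}\setminus\{0\}$, $n\in\{0,1,2,\dots\}$, $l\in\{|m|,|m|+1,\dots\}$, and define $$\alpha_1=\frac{ma}{\mu M^2},\quad \alpha_2=\frac{2n+1}{\mu M}\sqrt{1-\frac{a^2}{M^2}},\quad \alpha=\alpha_1-i\alpha_2,\quad \epsilon=2\sqrt{1-\frac{a^2}{M^2}},\quad \beta=6-\frac{l(l+1)}{\mu^2M^2},$$ and, for $\beta\geq0$, $$q(z)=z^4+\frac{4z}{\beta+\epsilon}\left[(2+\epsilon)(z^2+1)+\alpha(z^2-1)\right]+2\,\frac{16-\beta+3\epsilon}{\beta+\epsilon}\,z^2+1,\quad z\in\mathbb{C}.$$ If $\alpha_1>2+\epsilon$ and $0<\beta<8+\epsilon$, then the open first quadrant $\{z\in\mathbb{C}:\mathrm{Re}(z)>0,\ \mathrm{Im}(z)>0\}$ contains precisely $1$ root of $q$. *)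

theory Defs
  imports "HOL-Analysis.Analysis" "HOL-Computational_Algebra.Polynomial"
begin

definition alpha1 :: "real \<Rightarrow> real \<Rightarrow> real \<Rightarrow> int \<Rightarrow> real" where
  "alpha1 M a \<mu> m = of_int m * a / (\<mu> * M^2)"

definition alpha2 :: "real \<Rightarrow> real \<Rightarrow> real \<Rightarrow> nat \<Rightarrow> real" where
  "alpha2 M a \<mu> n = (2 * real n + 1) / (\<mu> * M) * sqrt (1 - a^2 / M^2)"

definition epsK :: "real \<Rightarrow> real \<Rightarrow> real" where
  "epsK M a = 2 * sqrt (1 - a^2 / M^2)"

definition betaK :: "real \<Rightarrow> real \<Rightarrow> nat \<Rightarrow> real" where
  "betaK M \<mu> l = 6 - real l * (real l + 1) / (\<mu>^2 * M^2)"

definition qpoly :: "complex \<Rightarrow> real \<Rightarrow> real \<Rightarrow> complex poly" where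
  "qpoly \<alpha> \<beta> \<epsilon> =
     monom 1 4
   + smult (4 / complex_of_real (\<beta> + \<epsilon>))
       (monom (complex_of_real (2 + \<epsilon>) + \<alpha>) 3 + monom (complex_of_real (2 + \<epsilon>) - \<alpha>) 1)
   + monom (complex_of_real (2 * (16 - \<beta> + 3 * \<epsilon>) / (\<beta> + \<epsilon>))) 2
   + 1"

lemma poly_qpoly:
  "poly (qpoly \<alpha> \<beta> \<epsilon>) z =
     z^4 + (4 * z / complex_of_real (\<beta> + \<epsilon>)) *
        (complex_of_real (2 + \<epsilon>) * (z^2 + 1) + \<alpha> * (z^2 - 1))
     + complex_of_real (2 * (16 - \<beta> + 3 * \<epsilon>) / (\<beta> + \<epsilon>)) * z^2 + 1"
  by (simp add: qpoly_def poly_monom algebra_simps power_numeral_reduce)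

end

theory Submission
  imports Defs "HOL-Complex_Analysis.Complex_Analysis"
begin


lemma zorder_poly:
  fixes p :: "complex poly"
  assumes "p \<noteq> 0"
  shows "zorder (poly p) z = int (order z p)"
proof -
  obtain r where r: "p = [:-z,1:]^order z p * r" and nd: "\<not> [:-z,1:] dvd r"
    using order_decomp[OF assms] by blast
  have "poly r z \<noteq> 0" using nd by (simp add: poly_eq_0_iff_dvd)
  show ?thesis
  proof (rule zorder_eqI[of UNIV z "poly r"])
    show "poly r holomorphic_on UNIV" by (auto intro: holomorphic_intros)
    fix w assume "w \<in> (UNIV::complex set)" "w \<noteq> z"
    have "poly p w = poly r w * (w - z) ^ order z p"
      by (subst r) (simp add: poly_mult poly_power algebra_simps)
    then show "poly p w = poly r w * (w - z) powi int (order z p)"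
      by (simp add: power_int_def)
  qed (use \<open>poly r z \<noteq> 0\<close> in auto)
qed

lemma ci_wn:
  fixes f :: "complex \<Rightarrow> complex"
  assumes holo: "f holomorphic_on UNIV" and vg: "valid_path \<gamma>"
    and nz: "\<And>w. w \<in> path_image \<gamma> \<Longrightarrow> f w \<noteq> 0"
  shows "contour_integral \<gamma> (\<lambda>x. deriv f x / f x) = 2 * pi * \<i> * winding_number (f \<circ> \<gamma>) 0"
proof -
  obtain spikes
    where "finite spikes" and spikes: "\<forall>x\<in>{0..1} - spikes. \<gamma> differentiable at x"
    using vg by (auto simp: valid_path_def piecewise_C1_differentiable_on_def C1_differentiable_on_eq)
  have valid: "valid_path (f \<circ> \<gamma>)"
    by (rule valid_path_compose_holomorphic[OF vg holo]) auto
  have z0: "0 \<notin> path_image (f \<circ> \<gamma>)" using nz by (auto simp: path_image_compose)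
  have hc: "((\<lambda>z. 1/z) has_contour_integral (2 * pi * \<i> * winding_number (f \<circ> \<gamma>) 0)) (f \<circ> \<gamma>)"
    using has_contour_integral_winding_number[OF valid z0] by simp
  have "vector_derivative (f \<circ> \<gamma>) (at x) = vector_derivative \<gamma> (at x) * deriv f (\<gamma> x)"
    if "x\<in>{0..1} - spikes" for x
  proof (rule vector_derivative_chain_at_general)
    show "\<gamma> differentiable at x" using that spikes by auto
    show "f field_differentiable at (\<gamma> x)"
      using holo holomorphic_on_imp_differentiable_at by blast
  qed
  then have "((/) 1 has_contour_integral (2 * pi * \<i> * winding_number (f \<circ> \<gamma>) 0)) (f \<circ> \<gamma>)
           = ((\<lambda>x. deriv f x / f x) has_contour_integral (2 * pi * \<i> * winding_number (f \<circ> \<gamma>) 0)) \<gamma>"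
    unfolding has_contour_integral
    by (force intro!: has_integral_spike_eq[OF negligible_finite, OF \<open>finite spikes\<close>])
  with hc show ?thesis using contour_integral_unique by auto
qed

lemma ap_sum:
  fixes f :: "complex \<Rightarrow> complex"
  assumes holo: "f holomorphic_on UNIV" and vg: "valid_path \<gamma>" and loop: "pathfinish \<gamma> = pathstart \<gamma>"
    and nz: "\<And>w. w \<in> path_image \<gamma> \<Longrightarrow> f w \<noteq> 0" and fin: "finite {w. f w = 0}"
  shows "winding_number (f \<circ> \<gamma>) 0 = (\<Sum>p\<in>{w. f w = 0}. winding_number \<gamma> p * zorder f p)"
proof -
  have "contour_integral \<gamma> (\<lambda>x. deriv f x * 1 / f x) = 2 * pi * \<i> *
          (\<Sum>p\<in>{w\<in>UNIV. f w = 0 \<or> w \<in> {}}. winding_number \<gamma> p * 1 * zorder f p)"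
    by (rule argument_principle[of UNIV f "{}" "\<lambda>_. 1" \<gamma>]) (use assms in auto)
  moreover have "contour_integral \<gamma> (\<lambda>x. deriv f x / f x) = 2 * pi * \<i> * winding_number (f \<circ> \<gamma>) 0"
    by (rule ci_wn[OF holo vg nz])
  ultimately show ?thesis by simp
qed

lemma count_eq:
  fixes f g :: "complex \<Rightarrow> complex"
  assumes holo: "f holomorphic_on UNIV" "g holomorphic_on UNIV"
    and vg: "valid_path \<gamma>" and loop: "pathfinish \<gamma> = pathstart \<gamma>"
    and seg: "\<And>w. w \<in> path_image \<gamma> \<Longrightarrow> 0 \<notin> closed_segment (f w) (g w)"
    and fin: "finite {w. f w = 0}" "finite {w. g w = 0}"
  shows "(\<Sum>p\<in>{w. g w = 0}. winding_number \<gamma> p * zorder g p) =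
         (\<Sum>p\<in>{w. f w = 0}. winding_number \<gamma> p * zorder f p)"
proof -
  have nzf: "f w \<noteq> 0" and nzg: "g w \<noteq> 0" if "w \<in> path_image \<gamma>" for w
    using seg[OF that] by auto
  have pg: "path \<gamma>" using vg valid_path_imp_path by blast
  have "winding_number (g \<circ> \<gamma>) 0 = winding_number (f \<circ> \<gamma>) 0"
  proof (rule winding_number_loops_linear_eq)
    show "path (f \<circ> \<gamma>)" "path (g \<circ> \<gamma>)"
      using holo pg by (auto intro!: path_continuous_image holomorphic_on_imp_continuous_on elim: holomorphic_on_subset)
    show "pathfinish (f \<circ> \<gamma>) = pathstart (f \<circ> \<gamma>)" "pathfinish (g \<circ> \<gamma>) = pathstart (g \<circ> \<gamma>)"
      using loop by (auto simp: pathfinish_compose pathstart_compose)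
    fix t :: real assume "t \<in> {0..1}"
    then have "\<gamma> t \<in> path_image \<gamma>" by (simp add: path_image_def)
    then show "0 \<notin> closed_segment ((f \<circ> \<gamma>) t) ((g \<circ> \<gamma>) t)" using seg by simp
  qed
  with ap_sum[OF holo(1) vg loop nzf fin(1)] ap_sum[OF holo(2) vg loop nzg fin(2)]
  show ?thesis by simp
qed



definition tri :: "real \<Rightarrow> real \<Rightarrow> complex" where
  "tri R = linepath 0 (of_real R) +++ linepath (of_real R) (\<i> * of_real R) +++ linepath (\<i> * of_real R) 0"

lemma tri_hull:
  assumes "R > 0"
  shows "convex hull {0, of_real R, \<i> * of_real R} = {w. Re w \<ge> 0 \<and> Im w \<ge> 0 \<and> Re w + Im w \<le> R}"
proof (rule set_eqI, rule iffI)
  fix w assume "w \<in> convex hull {0, of_real R, \<i> * of_real R}"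
  then obtain u v t where h: "0 \<le> u" "0 \<le> v" "0 \<le> t" "u + v + t = 1"
    and w: "w = u *\<^sub>R 0 + v *\<^sub>R of_real R + t *\<^sub>R (\<i> * of_real R)"
    using convex_hull_3[of 0 "of_real R" "\<i> * of_real R"] by auto
  have "Re w = v * R" "Im w = t * R" using w by (simp_all add: scaleR_conv_of_real)
  moreover have "v * R + t * R \<le> R" using h assms
    using mult_right_mono[of "v+t" 1 R] h assms by (simp add: distrib_right)
  ultimately show "w \<in> {w. Re w \<ge> 0 \<and> Im w \<ge> 0 \<and> Re w + Im w \<le> R}"
    using h assms by simp
next
  fix w assume "w \<in> {w. Re w \<ge> 0 \<and> Im w \<ge> 0 \<and> Re w + Im w \<le> R}"
  then have h: "Re w \<ge> 0" "Im w \<ge> 0" "Re w + Im w \<le> R" by auto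
  show "w \<in> convex hull {0, of_real R, \<i> * of_real R}"
    unfolding convex_hull_3
  proof (intro CollectI exI conjI)
    show "w = (1 - Re w / R - Im w / R) *\<^sub>R 0 + (Re w / R) *\<^sub>R of_real R + (Im w / R) *\<^sub>R (\<i> * of_real R)"
      using assms by (simp add: complex_eq_iff scaleR_conv_of_real)
    have "Re w / R + Im w / R \<le> 1" using h assms by (simp add: add_divide_distrib[symmetric])
    then show "0 \<le> 1 - Re w / R - Im w / R" by simp
  qed (use h assms in auto)
qed

lemma tri_basic:
  assumes "R > 0"
  shows "valid_path (tri R)" "pathfinish (tri R) = pathstart (tri R)"
    "path_image (tri R) = closed_segment 0 (of_real R) \<union> closed_segment (of_real R) (\<i> * of_real R) \<union> closed_segment (\<i> * of_real R) 0"
proof -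
  show "valid_path (tri R)" unfolding tri_def
    by (intro valid_path_join valid_path_linepath) simp_all
  show "pathfinish (tri R) = pathstart (tri R)" unfolding tri_def by simp
  have "path_image (tri R) = closed_segment 0 (of_real R) \<union> (closed_segment (of_real R) (\<i> * of_real R) \<union> closed_segment (\<i> * of_real R) 0)"
    unfolding tri_def by (subst path_image_join; simp)+
  then show "path_image (tri R) = closed_segment 0 (of_real R) \<union> closed_segment (of_real R) (\<i> * of_real R) \<union> closed_segment (\<i> * of_real R) 0"
    by (simp add: Un_assoc)
qed

lemma tri_image_sub:
  assumes "R > 0"
  shows "path_image (tri R) \<subseteq> convex hull {0, of_real R, \<i> * of_real R}"
proof -
  have "closed_segment a b \<subseteq> convex hull {0, of_real R, \<i> * of_real R}"
    if "a \<in> {0, of_real R, \<i> * of_real R}" "b \<in> {0, of_real R, \<i> * of_real R}" for a b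
    using that by (simp add: segment_convex_hull hull_mono)
  then show ?thesis using tri_basic(3)[OF assms] by auto
qed

lemma tri_wn_out:
  assumes "R > 0" "\<not> (Re w \<ge> 0 \<and> Im w \<ge> 0 \<and> Re w + Im w \<le> R)"
  shows "winding_number (tri R) w = 0"
proof (rule winding_number_zero_outside[of _ "convex hull {0, of_real R, \<i> * of_real R}"])
  show "path (tri R)" using tri_basic(1)[OF assms(1)] valid_path_imp_path by blast
  show "w \<notin> convex hull {0, complex_of_real R, \<i> * complex_of_real R}"
    using tri_hull[OF assms(1)] assms(2) by simp
qed (use tri_basic[OF assms(1)] tri_image_sub[OF assms(1)] in auto)

lemma tri_wn_in:
  assumes "R > 0" "Re w > 0" "Im w > 0" "Re w + Im w < R"
  shows "winding_number (tri R) w = 1"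
proof -
  define T where "T = {w. Re w > 0 \<and> Im w > 0 \<and> Re w + Im w < R}"
  have e3: "{w::complex. Re w + Im w < R} = {w. inner (1 + \<i>) w < R}"
    by (simp add: inner_complex_def)
  have o3: "open {w::complex. Re w + Im w < R}"
    unfolding e3 by (rule open_halfspace_lt)
  have eT: "T = {w. 0 < Re w} \<inter> {w. 0 < Im w} \<inter> {w::complex. Re w + Im w < R}"
    unfolding T_def by auto
  have "open T" unfolding eT
    by (intro open_Int o3 open_halfspace_Re_gt open_halfspace_Im_gt)
  moreover have "T \<subseteq> convex hull {0, of_real R, \<i> * of_real R}"
    unfolding T_def tri_hull[OF assms(1)] by auto
  ultimately have "T \<subseteq> interior (convex hull {0, of_real R, \<i> * of_real R})"
    using interior_maximal by blast
  moreover have "w \<in> T" unfolding T_def using assms by simp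
  ultimately have "w \<in> interior (convex hull {0, of_real R, \<i> * of_real R})" by blast
  from winding_number_triangle[OF this]
  have "winding_number (tri R) w = (if 0 < Im ((of_real R - 0) * cnj (of_real R - w)) then 1 else -1)"
    unfolding tri_def .
  moreover have "Im ((of_real R - 0) * cnj (of_real R - w)) = R * Im w" by simp
  moreover have "R * Im w > 0" using assms by simp
  ultimately show ?thesis by simp
qed



lemma Q_gen:
  fixes al :: complex and b e :: real
  assumes D: "b + e \<noteq> 0"
  shows "poly (qpoly al b e) z = z^4 + of_real (4/(b+e)) * z * (of_real (2+e)*(z^2+1) + al*(z^2-1))
           + of_real (2*(16-b+3*e)/(b+e)) * z^2 + 1"
proof -
  have D': "complex_of_real b + complex_of_real e \<noteq> 0" using D by (metis of_real_add of_real_eq_0_iff)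
  show ?thesis unfolding poly_qpoly using D'
    by (simp add: field_simps)
qed

lemma Q_imag:
  fixes a1 a2 b e y :: real
  assumes D: "b + e \<noteq> 0"
  shows "poly (qpoly (complex_of_real a1 - \<i> * complex_of_real a2) b e) (\<i> * of_real y) =
     of_real (y^4 - 2*(16-b+3*e)/(b+e) * y^2 + 1 - (4/(b+e))*y*a2*(1+y^2))
     + \<i> * of_real ((4/(b+e))*y*((2+e)*(1-y^2) - a1*(1+y^2)))"
proof -
  define k where "k = 4/(b+e)"
  define c where "c = 2*(16-b+3*e)/(b+e)"
  have i2: "\<i> * \<i> = -1" by simp
  have "poly (qpoly (complex_of_real a1 - \<i> * complex_of_real a2) b e) (\<i> * of_real y) =
     (\<i> * of_real y)^4 + of_real k * (\<i> * of_real y) * ((of_real 2 + of_real e)*((\<i> * of_real y)^2+1)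
       + (complex_of_real a1 - \<i> * complex_of_real a2)*((\<i> * of_real y)^2-1))
           + of_real c * (\<i> * of_real y)^2 + 1"
    unfolding Q_gen[OF D] k_def c_def by simp
  also have "\<dots> = of_real (y^4 - c * y^2 + 1 - k*y*a2*(1+y^2))
     + \<i> * of_real (k*y*((2+e)*(1-y^2) - a1*(1+y^2)))"
    unfolding of_real_add of_real_mult of_real_power of_real_diff of_real_1 of_real_numeral
    using i2 by algebra
  finally show ?thesis unfolding k_def c_def .
qed

lemma Q_real:
  fixes a1 a2 b e x :: real
  assumes D: "b + e \<noteq> 0"
  shows "poly (qpoly (complex_of_real a1 - \<i> * complex_of_real a2) b e) (of_real x) =
     of_real (x^4 + (4/(b+e))*x*((2+e)*(x^2+1) + a1*(x^2-1)) + 2*(16-b+3*e)/(b+e) * x^2 + 1)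
     + \<i> * of_real (-(4/(b+e))*x*a2*(x^2-1))"
proof -
  define k where "k = 4/(b+e)"
  define c where "c = 2*(16-b+3*e)/(b+e)"
  have i2: "\<i> * \<i> = -1" by simp
  have "poly (qpoly (complex_of_real a1 - \<i> * complex_of_real a2) b e) (of_real x) =
     (of_real x)^4 + of_real k * (of_real x) * ((of_real 2 + of_real e)*((of_real x)^2+1)
       + (complex_of_real a1 - \<i> * complex_of_real a2)*((of_real x)^2-1))
           + of_real c * (of_real x)^2 + 1"
    unfolding Q_gen[OF D] k_def c_def by simp
  also have "\<dots> = of_real (x^4 + k*x*((2+e)*(x^2+1) + a1*(x^2-1)) + c * x^2 + 1)
     + \<i> * of_real (-k*x*a2*(x^2-1))"
    unfolding of_real_add of_real_mult of_real_power of_real_diff of_real_1 of_real_numeral of_real_minus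
    by algebra
  finally show ?thesis unfolding k_def c_def .
qed

lemma seg1:
  fixes f g :: complex
  assumes "cmod (g - f) < cmod f"
  shows "0 \<notin> closed_segment f g"
proof
  assume "0 \<in> closed_segment f g"
  then obtain u where u: "0 \<le> u" "u \<le> 1" "0 = (1 - u) *\<^sub>R f + u *\<^sub>R g"
    by (auto simp: in_segment)
  then have "0 = f + u *\<^sub>R (g - f)" by (simp add: algebra_simps)
  then have "f = - (u *\<^sub>R (g - f))" by (simp add: eq_neg_iff_add_eq_0)
  then have "cmod f = u * cmod (g - f)" by (metis norm_minus_cancel norm_scaleR abs_of_nonneg u(1))
  also have "\<dots> \<le> cmod (g - f)" using u by (simp add: mult_left_le_one_le)
  finally show False using assms by simp
qed

lemma seg2:
  fixes g :: complex and r :: real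
  assumes "r > 0" "Im g \<noteq> 0 \<or> Re g > 0"
  shows "0 \<notin> closed_segment (of_real r) g"
proof
  assume "0 \<in> closed_segment (of_real r) g"
  then obtain u where u: "0 \<le> u" "u \<le> 1" "0 = (1 - u) *\<^sub>R (of_real r) + u *\<^sub>R g"
    by (auto simp: in_segment)
  then have e: "0 = complex_of_real ((1 - u) * r) + complex_of_real u * g"
    by (simp add: scaleR_conv_of_real)
  have re: "0 = (1 - u) * r + u * Re g" using arg_cong[OF e, of Re] by simp
  have im: "0 = u * Im g" using arg_cong[OF e, of Im] by simp
  show False
  proof (cases "u = 0")
    case True then show False using re assms by simp
  next
    case False
    then have "Im g = 0" using im by simp
    then have "Re g > 0" using assms by simp
    have "(1 - u) * r \<ge> 0" using u assms by simp
    moreover have "u * Re g > 0" using False u \<open>Re g > 0\<close> by simp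
    ultimately show False using re by linarith
  qed
qed

lemma bound:
  fixes c1 c2 c3 z :: complex
  assumes "cmod z \<ge> cmod c3 + cmod c2 + cmod c1 + 2"
  shows "cmod (c3 * z^3 + c2 * z^2 + c1 * z) < cmod (z^4 + 1)"
proof -
  define r where "r = cmod z"
  define S where "S = cmod c3 + cmod c2 + cmod c1"
  have S0: "S \<ge> 0" unfolding S_def by simp
  have r1: "r \<ge> 2" using assms S0 unfolding r_def S_def by linarith
  have "cmod (c3 * z^3 + c2 * z^2 + c1 * z) \<le> cmod c3 * r^3 + cmod c2 * r^2 + cmod c1 * r"
    unfolding r_def by (metis (no_types, lifting) norm_mult norm_power norm_triangle_le norm_triangle_ineq add_mono order_refl)
  also have "\<dots> \<le> cmod c3 * r^3 + cmod c2 * r^3 + cmod c1 * r^3"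
  proof -
    have "r^2 \<le> r^3" "r \<le> r^3" using r1
      by (simp_all add: power_increasing[of 2 3 r] power_increasing[of 1 3 r, simplified])
    then show ?thesis by (intro add_mono mult_left_mono) simp_all
  qed
  also have "\<dots> = S * r^3" unfolding S_def by (simp add: algebra_simps)
  also have "\<dots> < r^4 - 1"
  proof -
    have "r - S \<ge> 2" using assms unfolding r_def S_def by simp
    have "r^3 \<ge> 1" using r1 by (simp add: one_le_power)
    have "r^3 * (r - S) \<ge> r^3 * 2" using \<open>r - S \<ge> 2\<close> \<open>r^3 \<ge> 1\<close> by (intro mult_left_mono) linarith+
    then show ?thesis using \<open>r^3 \<ge> 1\<close> by (simp add: algebra_simps power_Suc[symmetric] eval_nat_numeral)
  qed
  also have "\<dots> \<le> cmod (z^4 + 1)"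
  proof -
    have "cmod (z^4) \<le> cmod (z^4 + 1) + cmod (1::complex)" by (metis add_diff_cancel norm_triangle_ineq4)
    then show ?thesis unfolding r_def by (simp add: norm_power)
  qed
  finally show ?thesis .
qed

lemma axis_real:
  fixes a1 a2 b e x :: real
  assumes "e \<ge> 0" "b + e > 0" "a2 > 0" "x \<ge> 0"
  defines "g \<equiv> poly (qpoly (complex_of_real a1 - \<i> * complex_of_real a2) b e) (of_real x)"
  shows "Im g \<noteq> 0 \<or> Re g > 0"
proof (cases "Im g = 0")
  case True
  have D: "b + e \<noteq> 0" using assms by simp
  have im: "Im g = -(4/(b+e))*x*a2*(x^2-1)" and re: "Re g = x^4 + (4/(b+e))*x*((2+e)*(x^2+1) + a1*(x^2-1)) + 2*(16-b+3*e)/(b+e) * x^2 + 1"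
    unfolding g_def Q_real[OF D] by simp_all
  have "x = 0 \<or> x^2 - 1 = 0" using True im assms by simp
  then have "x = 0 \<or> x = 1" using assms(4) by (auto simp: power2_eq_square) (metis abs_of_nonneg abs_square_eq_1 power2_eq_square)
  then show ?thesis
  proof
    assume "x = 0" then show ?thesis using re by simp
  next
    assume x1: "x = 1"
    have r1: "Re g = 2 + 8*(2+e)/(b+e) + 2*(16-b+3*e)/(b+e)" using re x1 by simp
    have "Re g * (b+e) = 2*(b+e) + 8*(2+e)/(b+e)*(b+e) + 2*(16-b+3*e)/(b+e)*(b+e)"
      unfolding r1 by (simp add: distrib_right)
    also have "\<dots> = 2*(b+e) + 8*(2+e) + 2*(16-b+3*e)" using D by simp
    also have "\<dots> = 48 + 16*e" by simp
    finally have "Re g * (b+e) > 0" using assms by simp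
    then show ?thesis using assms(2) by (simp add: zero_less_mult_iff)
  qed
qed simp

lemma axis_imag:
  fixes a1 a2 b e y :: real
  assumes "e \<ge> 0" "b + e > 0" "a1 > 2 + e" "y \<ge> 0"
  defines "g \<equiv> poly (qpoly (complex_of_real a1 - \<i> * complex_of_real a2) b e) (\<i> * of_real y)"
  shows "Im g \<noteq> 0 \<or> Re g > 0"
proof -
  have D: "b + e \<noteq> 0" using assms by simp
  have im: "Im g = (4/(b+e))*y*((2+e)*(1-y^2) - a1*(1+y^2))" and re: "Re g = y^4 - 2*(16-b+3*e)/(b+e) * y^2 + 1 - (4/(b+e))*y*a2*(1+y^2)"
    unfolding g_def Q_imag[OF D] by simp_all
  show ?thesis
  proof (cases "y = 0")
    case True then show ?thesis using re by simp
  next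
    case False
    then have y: "y > 0" using assms by simp
    have "(2+e)*(1+y^2) < a1*(1+y^2)" using assms by (intro mult_strict_right_mono) (simp_all add: add_pos_nonneg)
    moreover have "(2+e)*(1-y^2) \<le> (2+e)*(1+y^2)" using assms by (intro mult_left_mono) simp_all
    ultimately have "(2+e)*(1-y^2) - a1*(1+y^2) < 0" by simp
    moreover have "(4/(b+e))*y > 0" using y assms by simp
    ultimately have "Im g < 0" unfolding im by (rule mult_pos_neg[rotated])
    then show ?thesis by simp
  qed
qed

definition w0 :: complex where "w0 = Complex (sqrt 2 / 2) (sqrt 2 / 2)"

lemma w0_sq: "w0^2 = \<i>"
  by (simp add: w0_def power2_eq_square complex_eq_iff)

lemma w0_root: "w0^4 + 1 = 0"
proof -
  have "w0^4 = (w0^2)^2" by (simp flip: power_mult)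
  then show ?thesis by (simp add: w0_sq)
qed

lemma f_roots_Q1:
  fixes w :: complex
  assumes "w^4 + 1 = 0" "Re w \<ge> 0" "Im w \<ge> 0"
  shows "w = w0"
proof -
  have "(w^2 - \<i>) * (w^2 + \<i>) = w^4 + 1" by (simp add: algebra_simps power2_eq_square eval_nat_numeral)
  then have "w^2 = \<i> \<or> w^2 = -\<i>" using assms(1) by (simp add: eq_neg_iff_add_eq_0)
  moreover have "Im (w^2) = 2 * Re w * Im w" by (simp add: power2_eq_square)
  moreover have "2 * Re w * Im w \<ge> 0" using assms by simp
  ultimately have "Im (w^2) \<ge> 0" by simp
  then have "w^2 \<noteq> -\<i>" by auto
  with \<open>w^2 = \<i> \<or> w^2 = -\<i>\<close> have w2: "w^2 = \<i>" by blast
  then have h1: "Re w * Re w - Im w * Im w = 0" and h2: "2 * Re w * Im w = 1"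
    by (simp_all add: power2_eq_square complex_eq_iff mult.commute)
  have "Re w = Im w"
  proof -
    have "(Re w - Im w) * (Re w + Im w) = 0" using h1 by (simp add: algebra_simps)
    moreover have "Re w + Im w > 0" using h2 assms by (metis add_nonneg_nonneg less_eq_real_def mult_zero_left mult_zero_right not_less_iff_gr_or_eq zero_neq_one add_nonneg_eq_0_iff)
    ultimately show ?thesis by simp
  qed
  then have "Re w ^ 2 = 1/2" using h2 by (simp add: power2_eq_square)
  then have "Re w = sqrt (1/2)" using assms(2) by (metis real_sqrt_unique)
  moreover have "sqrt (1/2) = sqrt 2 / 2" by (simp add: real_sqrt_divide) (metis real_div_sqrt zero_le_numeral)
  ultimately show ?thesis using \<open>Re w = Im w\<close> by (simp add: w0_def complex_eq_iff)
qed

lemma zorder_w0: "zorder (\<lambda>z. z^4 + 1) w0 = 1"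
proof (rule zorder_eqI[of UNIV w0 "\<lambda>z. z^3 + w0*z^2 + w0^2*z + w0^3"])
  show "(\<lambda>z. z^3 + w0*z^2 + w0^2*z + w0^3) holomorphic_on UNIV" by (auto intro!: holomorphic_intros)
  have e4: "w0^3 + w0*w0^2 + w0^2*w0 + w0^3 = 4 * w0^3" by algebra
  have "w0 \<noteq> 0" using w0_sq by auto
  then show "w0^3 + w0*w0^2 + w0^2*w0 + w0^3 \<noteq> 0" unfolding e4 by simp
  fix w :: complex
  have "(w^3 + w0*w^2 + w0^2*w + w0^3) * (w - w0) = w^4 - w0^4" by (simp add: algebra_simps power2_eq_square eval_nat_numeral)
  also have "\<dots> = w^4 + 1" using w0_root by (simp add: algebra_simps eq_neg_iff_add_eq_0)
  finally show "w^4 + 1 = (w^3 + w0*w^2 + w0^2*w + w0^3) * (w - w0) powi 1" by simp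
qed auto

lemma main_abs:
  fixes a1 a2 b e :: real
  assumes e0: "e \<ge> 0" and be: "b + e > 0" and a1: "a1 > 2 + e" and a2: "a2 > 0"
  shows "(\<Sum>z\<in>{z. poly (qpoly (complex_of_real a1 - \<i> * complex_of_real a2) b e) z = 0 \<and> Re z > 0 \<and> Im z > 0}.
            order z (qpoly (complex_of_real a1 - \<i> * complex_of_real a2) b e)) = 1"
proof -
  define al where "al = complex_of_real a1 - \<i> * complex_of_real a2"
  define Q where "Q = qpoly al b e"
  have D: "b + e \<noteq> 0" using be by simp
  define c3 where "c3 = complex_of_real (4/(b+e)) * (complex_of_real (2+e) + al)"
  define c2 where "c2 = complex_of_real (2*(16-b+3*e)/(b+e))"
  define c1 where "c1 = complex_of_real (4/(b+e)) * (complex_of_real (2+e) - al)"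
  have Qf: "poly Q z = z^4 + 1 + (c3 * z^3 + c2 * z^2 + c1 * z)" for z
    unfolding Q_def Q_gen[OF D] c1_def c2_def c3_def by algebra
  define S where "S = cmod c3 + cmod c2 + cmod c1"
  define R where "R = 2 * (S + 2)"
  have S0: "S \<ge> 0" unfolding S_def by simp
  have R0: "R > 0" and R4: "R \<ge> 4" using S0 unfolding R_def by simp_all
  have big: "cmod (poly Q z - (z^4+1)) < cmod (z^4+1)" if "cmod z \<ge> S + 2" for z
    using bound[of c3 c2 c1 z] that Qf unfolding S_def by simp
  have Q0: "Q \<noteq> 0"
  proof
    assume "Q = 0"
    then have "poly Q 0 = 0" by simp
    then show False using Qf[of 0] by simp
  qed
  have rootsmall: "cmod z < S + 2" if "poly Q z = 0" for z
  proof (rule ccontr)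
    assume "\<not> cmod z < S + 2"
    then have "cmod (poly Q z - (z^4+1)) < cmod (z^4+1)" using big by simp
    moreover have "poly Q z - (z^4+1) = -(z^4+1)" using that by simp
    ultimately show False by (metis norm_minus_cancel less_irrefl)
  qed
  have axR: "Im (poly Q (of_real x)) \<noteq> 0 \<or> Re (poly Q (of_real x)) > 0" if "x \<ge> 0" for x
    unfolding Q_def al_def using axis_real[OF e0 be a2 that] by simp
  have axI: "Im (poly Q (\<i> * of_real y)) \<noteq> 0 \<or> Re (poly Q (\<i> * of_real y)) > 0" if "y \<ge> 0" for y
    unfolding Q_def al_def using axis_imag[OF e0 be a1 that] by simp
  have nzR: "poly Q (of_real x) \<noteq> 0" if "x \<ge> 0" for x using axR[OF that] by auto
  have nzI: "poly Q (\<i> * of_real y) \<noteq> 0" if "y \<ge> 0" for y using axI[OF that] by auto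
  have seg: "0 \<notin> closed_segment ((\<lambda>z. z^4+1) w) (poly Q w)" if w: "w \<in> path_image (tri R)" for w
  proof -
    consider "w \<in> closed_segment 0 (of_real R)" | "w \<in> closed_segment (of_real R) (\<i> * of_real R)"
      | "w \<in> closed_segment (\<i> * of_real R) 0"
      using w tri_basic(3)[OF R0] by blast
    then show ?thesis
    proof cases
      case 1
      then obtain u where u: "0 \<le> u" "u \<le> 1" "w = (1 - u) *\<^sub>R 0 + u *\<^sub>R of_real R"
        by (auto simp: in_segment)
      define x where "x = u * R"
      have x0: "x \<ge> 0" unfolding x_def using u R0 by simp
      have wx: "w = of_real x" using u unfolding x_def by (simp add: scaleR_conv_of_real)
      have "(\<lambda>z. z^4+1) w = of_real (x^4 + 1)" unfolding wx by simp
      moreover have "x^4 + 1 > 0" by (simp add: add_nonneg_pos)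
      ultimately show ?thesis using seg2[OF \<open>x^4 + 1 > 0\<close> axR[OF x0]] wx by simp
    next
      case 2
      then obtain u where u: "0 \<le> u" "u \<le> 1" "w = (1 - u) *\<^sub>R of_real R + u *\<^sub>R (\<i> * of_real R)"
        by (auto simp: in_segment)
      have re: "Re w = (1 - u) * R" and im: "Im w = u * R" using u by (simp_all add: scaleR_conv_of_real)
      have "cmod w \<ge> R / 2"
      proof (cases "u \<le> 1/2")
        case True
        then have "u * R \<le> (1/2) * R" using R0 by (intro mult_right_mono) simp_all
        then have "(1 - u) * R \<ge> R / 2" by (simp add: algebra_simps)
        then show ?thesis using abs_Re_le_cmod[of w] re by simp
      next
        case False
        then have "(1/2) * R \<le> u * R" using R0 by (intro mult_right_mono) simp_all
        then have "u * R \<ge> R / 2" by simp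
        then show ?thesis using abs_Im_le_cmod[of w] im by simp
      qed
      then have "cmod w \<ge> S + 2" unfolding R_def by simp
      then have "cmod (poly Q w - (w^4+1)) < cmod (w^4+1)" by (rule big)
      then show ?thesis using seg1 by simp
    next
      case 3
      then obtain u where u: "0 \<le> u" "u \<le> 1" "w = (1 - u) *\<^sub>R (\<i> * of_real R) + u *\<^sub>R 0"
        by (auto simp: in_segment)
      define y where "y = (1 - u) * R"
      have y0: "y \<ge> 0" unfolding y_def using u R0 by simp
      have wy: "w = \<i> * of_real y" using u unfolding y_def by (simp add: scaleR_conv_of_real algebra_simps)
      have "(\<lambda>z. z^4+1) w = of_real (y^4 + 1)" unfolding wy by (simp add: power_mult_distrib)
      moreover have "y^4 + 1 > 0" by (simp add: add_nonneg_pos)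
      ultimately show ?thesis using seg2[OF \<open>y^4 + 1 > 0\<close> axI[OF y0]] wy by simp
    qed
  qed
  have finQ: "finite {w. poly Q w = 0}" using poly_roots_finite[OF Q0] .
  have finf: "finite {w::complex. w^4 + 1 = 0}"
  proof -
    have "monom (1::complex) 4 + 1 \<noteq> 0"
    proof
      assume "monom (1::complex) 4 + 1 = 0"
      then have "poly (monom (1::complex) 4 + 1) 0 = 0" by simp
      then show False by (simp add: poly_monom)
    qed
    from poly_roots_finite[OF this] show ?thesis by (simp add: poly_monom)
  qed
  have ceq: "(\<Sum>p\<in>{w. poly Q w = 0}. winding_number (tri R) p * zorder (poly Q) p) =
         (\<Sum>p\<in>{w. w^4 + 1 = 0}. winding_number (tri R) p * zorder (\<lambda>z. z^4 + 1) p)"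
    by (rule count_eq[where f = "\<lambda>z. z^4 + 1" and g = "poly Q", OF _ _ tri_basic(1,2)[OF R0] seg finf finQ])
       (auto intro!: holomorphic_intros)
  have rhs: "(\<Sum>p\<in>{w. w^4 + 1 = 0}. winding_number (tri R) p * zorder (\<lambda>z. z^4 + 1) p) = 1"
  proof -
    have w0in: "w0 \<in> {w. w^4 + 1 = 0}" using w0_root by simp
    have "(\<Sum>p\<in>{w. w^4 + 1 = 0}. winding_number (tri R) p * zorder (\<lambda>z. z^4 + 1) p) =
          winding_number (tri R) w0 * zorder (\<lambda>z. z^4 + 1) w0 +
          (\<Sum>p\<in>{w. w^4 + 1 = 0} - {w0}. winding_number (tri R) p * zorder (\<lambda>z. z^4 + 1) p)"
      using sum.remove[OF finf w0in] by simp
    also have "(\<Sum>p\<in>{w. w^4 + 1 = 0} - {w0}. winding_number (tri R) p * zorder (\<lambda>z. z^4 + 1) p) = 0"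
    proof (rule sum.neutral, rule ballI)
      fix p assume p: "p \<in> {w. w^4 + 1 = 0} - {w0}"
      have "\<not> (Re p \<ge> 0 \<and> Im p \<ge> 0 \<and> Re p + Im p \<le> R)"
        using f_roots_Q1[of p] p by auto
      then show "winding_number (tri R) p * zorder (\<lambda>z. z^4 + 1) p = 0"
        using tri_wn_out[OF R0] by simp
    qed
    also have "winding_number (tri R) w0 = 1"
    proof (rule tri_wn_in[OF R0])
      show "Re w0 > 0" "Im w0 > 0" by (simp_all add: w0_def)
      have s2: "sqrt 2 * sqrt 2 = (2::real)" by simp
      have "sqrt 2 < 2"
      proof (rule ccontr)
        assume "\<not> sqrt 2 < 2"
        then have "2*2 \<le> sqrt 2 * sqrt (2::real)" by (intro mult_mono) auto
        with s2 show False by simp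
      qed
      then show "Re w0 + Im w0 < R" using R4 by (simp add: w0_def)
    qed
    finally show ?thesis by (simp add: zorder_w0)
  qed
  define Z1 where "Z1 = {z. poly Q z = 0 \<and> Re z > 0 \<and> Im z > 0}"
  have lhs: "(\<Sum>p\<in>{w. poly Q w = 0}. winding_number (tri R) p * zorder (poly Q) p) =
             (\<Sum>p\<in>Z1. of_nat (order p Q))"
  proof (rule sum.mono_neutral_cong_right[OF finQ])
    show "Z1 \<subseteq> {w. poly Q w = 0}" unfolding Z1_def by auto
    show "\<forall>p\<in>{w. poly Q w = 0} - Z1. winding_number (tri R) p * zorder (poly Q) p = 0"
    proof
      fix p assume p: "p \<in> {w. poly Q w = 0} - Z1"
      have "\<not> (Re p \<ge> 0 \<and> Im p \<ge> 0 \<and> Re p + Im p \<le> R)"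
      proof
        assume h: "Re p \<ge> 0 \<and> Im p \<ge> 0 \<and> Re p + Im p \<le> R"
        have "Re p = 0 \<or> Im p = 0" using p h unfolding Z1_def by auto
        then show False
        proof
          assume "Re p = 0"
          then have "p = \<i> * of_real (Im p)" by (simp add: complex_eq_iff)
          then show False using nzI[of "Im p"] h p by auto
        next
          assume "Im p = 0"
          then have "p = of_real (Re p)" by (simp add: complex_eq_iff)
          then show False using nzR[of "Re p"] h p by auto
        qed
      qed
      then show "winding_number (tri R) p * zorder (poly Q) p = 0"
        using tri_wn_out[OF R0] by simp
    qed
    fix p assume p: "p \<in> Z1"
    show "winding_number (tri R) p * zorder (poly Q) p = of_nat (order p Q)"
    proof -
      have "cmod p < S + 2" using rootsmall p unfolding Z1_def by simp
      moreover have "Re p \<le> cmod p" by (rule order_trans[OF abs_ge_self abs_Re_le_cmod])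
      moreover have "Im p \<le> cmod p" by (rule order_trans[OF abs_ge_self abs_Im_le_cmod])
      ultimately have "Re p + Im p < R" unfolding R_def by (smt (verit))
      then have "winding_number (tri R) p = 1" using tri_wn_in[OF R0] p unfolding Z1_def by simp
      then show "winding_number (tri R) p * zorder (poly Q) p = of_nat (order p Q)"
        using zorder_poly[OF Q0] by simp
    qed
  qed
  have "(\<Sum>p\<in>Z1. of_nat (order p Q)) = (1::complex)" using ceq rhs lhs by simp
  then have "of_nat (\<Sum>p\<in>Z1. order p Q) = (of_nat 1 :: complex)" by simp
  then have "(\<Sum>p\<in>Z1. order p Q) = 1" by (simp only: of_nat_eq_iff)
  then show ?thesis unfolding Z1_def Q_def al_def .
qed


theorem mainTheorem10:
  fixes M a \<mu> :: real and m :: int and n l :: nat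
  assumes "M > 0" and "0 < a" and "a < M" and "\<mu> > 0" and "m \<noteq> 0"
    and "l \<ge> nat \<bar>m\<bar>"
    and "alpha1 M a \<mu> m > 2 + epsK M a"
    and "0 < betaK M \<mu> l" and "betaK M \<mu> l < 8 + epsK M a"
  shows "(\<Sum>z\<in>{z. poly (qpoly (complex_of_real (alpha1 M a \<mu> m) - \<i> * complex_of_real (alpha2 M a \<mu> n))
                              (betaK M \<mu> l) (epsK M a)) z = 0 \<and> Re z > 0 \<and> Im z > 0}.
            order z (qpoly (complex_of_real (alpha1 M a \<mu> m) - \<i> * complex_of_real (alpha2 M a \<mu> n))
                              (betaK M \<mu> l) (epsK M a))) = 1"
proof -
  have "a^2 < M^2" using assms(2,3) by (intro power_strict_mono) simp_all
  then have "a^2 / M^2 < 1" using assms(1) by simp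
  then have s: "sqrt (1 - a^2 / M^2) > 0" by simp
  have e0: "epsK M a \<ge> 0" unfolding epsK_def using s by simp
  have be: "betaK M \<mu> l + epsK M a > 0" using e0 assms(8) by simp
  have a2: "alpha2 M a \<mu> n > 0" unfolding alpha2_def using s assms(1,4)
    by (intro mult_pos_pos divide_pos_pos) simp_all
  show ?thesis by (rule main_abs[OF e0 be assms(7) a2])
qed

end
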